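(* Let $n\geq 2$ and let $A$ be an $L_n$-good $n\times n$ matrix with $A_{i,j}=1$. If $A_{i',k}=1$ where $i'\equiv i-1$ or $i'\equiv i+1 \pmod n$, then $k\equiv j-1$ or $k\equiv j+1\pmod n$. (Here row and column indices are taken modulo $n$ in $\{1,\ldots,n\}$, so that index $0$ means $n$ and index $n+1$ means $1$.)
   Context: For $n\geq 2$, $L_n$ is the set of vectors $\vec{x}=(x_1,\ldots,x_n)\in\mathbb{Z}_2^n$ with no $i\in\{1,\ldots,n-1\}$ such that $x_i=x_{i+1}=1$, and with not both $x_1=1$ and $x_n=1$. An $n\times n$ matrix $A$ over $\mathbb{Z}_2$ is $L_n$-good if it is invertible and $A\vec{x}\in L_n$ for all $\vec{x}\in L_n$. $A_{i,j}$ denotes the $(i,j)$ entry of $A$. *)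

theory Defs
  imports Main "HOL-Library.Z2" "HOL-Number_Theory.Cong"
begin

text \<open>Vectors in Z_2^n are functions nat => bit, indexed by {1..n} (values outside
  are irrelevant). n x n matrices over Z_2 are functions nat => nat => bit indexed by
  {1..n} x {1..n}.\<close>

definition mat_vec :: "nat \<Rightarrow> (nat \<Rightarrow> nat \<Rightarrow> bit) \<Rightarrow> (nat \<Rightarrow> bit) \<Rightarrow> (nat \<Rightarrow> bit)" where
  "mat_vec n A x = (\<lambda>i. \<Sum>j\<in>{1..n}. A i j * x j)"

definition mat_mul :: "nat \<Rightarrow> (nat \<Rightarrow> nat \<Rightarrow> bit) \<Rightarrow> (nat \<Rightarrow> nat \<Rightarrow> bit) \<Rightarrow> (nat \<Rightarrow> nat \<Rightarrow> bit)" where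
  "mat_mul n A B = (\<lambda>i k. \<Sum>j\<in>{1..n}. A i j * B j k)"

definition invertible_mat :: "nat \<Rightarrow> (nat \<Rightarrow> nat \<Rightarrow> bit) \<Rightarrow> bool" where
  "invertible_mat n A \<longleftrightarrow> (\<exists>B. \<forall>i\<in>{1..n}. \<forall>k\<in>{1..n}.
      mat_mul n A B i k = (if i = k then 1 else 0) \<and>
      mat_mul n B A i k = (if i = k then 1 else 0))"

definition in_L :: "nat \<Rightarrow> (nat \<Rightarrow> bit) \<Rightarrow> bool" where
  "in_L n x \<longleftrightarrow> (\<forall>i\<in>{1..n-1}. \<not> (x i = 1 \<and> x (i+1) = 1)) \<and> \<not> (x 1 = 1 \<and> x n = 1)"

definition L_good :: "nat \<Rightarrow> (nat \<Rightarrow> nat \<Rightarrow> bit) \<Rightarrow> bool" where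
  "L_good n A \<longleftrightarrow> invertible_mat n A \<and> (\<forall>x. in_L n x \<longrightarrow> in_L n (mat_vec n A x))"

definition cyc_adj :: "nat \<Rightarrow> nat \<Rightarrow> nat \<Rightarrow> bool" where
  "cyc_adj n i i' \<longleftrightarrow> [int i' = int i - 1] (mod int n) \<or> [int i' = int i + 1] (mod int n)"

end

theory Submission
  imports Defs
begin

lemma adj_char:
  assumes n: "n \<ge> 2" and i: "i \<in> {1..n}" and i': "i' \<in> {1..n}"
  shows "cyc_adj n i i' \<longleftrightarrow> (i' = i+1 \<or> i = i'+1 \<or> (i=1 \<and> i'=n) \<or> (i=n \<and> i'=1))"
proof
  assume "cyc_adj n i i'"
  then consider "int n dvd (int i' - (int i - 1))" | "int n dvd (int i' - (int i + 1))"
    unfolding cyc_adj_def by (metis cong_iff_dvd_diff)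
  then show "(i' = i+1 \<or> i = i'+1 \<or> (i=1 \<and> i'=n) \<or> (i=n \<and> i'=1))"
  proof cases
    case 1
    then obtain c where c: "int i' - (int i - 1) = int n * c" by (auto elim: dvdE)
    have "c \<le> 1"
    proof (rule ccontr)
      assume "\<not> c \<le> 1" then have "c \<ge> 2" by simp
      then have "int n * c \<ge> int n * 2" by (simp add: mult_left_mono)
      moreover have "int i \<ge> 1" "int i \<le> int n" "int i' \<ge> 1" "int i' \<le> int n" "int n \<ge> 2" using i i' n by auto
      ultimately show False using c by linarith
    qed
    moreover have "c \<ge> 0"
    proof (rule ccontr)
      assume "\<not> c \<ge> 0" then have "c \<le> -1" by simp
      then have "int n * c \<le> int n * (-1)" using mult_left_mono[of c "-1" "int n"] by simp
      moreover have "int i \<ge> 1" "int i \<le> int n" "int i' \<ge> 1" "int i' \<le> int n" "int n \<ge> 2" using i i' n by auto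
      ultimately show False using c by linarith
    qed
    ultimately have "c = 0 \<or> c = 1" by auto
    thus ?thesis using c i i' n by auto
  next
    case 2
    then obtain c where c: "int i' - (int i + 1) = int n * c" by (auto elim: dvdE)
    have "c \<le> 0"
    proof (rule ccontr)
      assume "\<not> c \<le> 0" then have "c \<ge> 1" by simp
      then have "int n * c \<ge> int n * 1" using mult_left_mono[of 1 c "int n"] by simp
      moreover have "int i \<ge> 1" "int i \<le> int n" "int i' \<ge> 1" "int i' \<le> int n" "int n \<ge> 2" using i i' n by auto
      ultimately show False using c by linarith
    qed
    moreover have "c \<ge> -1"
    proof (rule ccontr)
      assume "\<not> c \<ge> -1" then have "c \<le> -2" by simp
      then have "int n * c \<le> int n * (-2)" using mult_left_mono[of c "-2" "int n"] by simp
      moreover have "int i \<ge> 1" "int i \<le> int n" "int i' \<ge> 1" "int i' \<le> int n" "int n \<ge> 2" using i i' n by auto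
      ultimately show False using c by linarith
    qed
    ultimately have "c = 0 \<or> c = -1" by auto
    thus ?thesis using c i i' n by auto
  qed
next
  assume "(i' = i+1 \<or> i = i'+1 \<or> (i=1 \<and> i'=n) \<or> (i=n \<and> i'=1))"
  moreover have "i' = i+1 \<Longrightarrow> cyc_adj n i i'" by (simp add: cyc_adj_def cong_def add.commute)
  moreover have "i = i'+1 \<Longrightarrow> cyc_adj n i i'" by (simp add: cyc_adj_def cong_def)
  moreover have "cyc_adj n i i'" if "i = 1" "i' = n"
  proof -
    have "int i' - (int i - 1) = int n * 1" using that by simp
    thus ?thesis unfolding cyc_adj_def by (metis cong_iff_dvd_diff dvd_triv_left)
  qed
  moreover have "cyc_adj n i i'" if "i = n" "i' = 1"
  proof -
    have "int i' - (int i + 1) = int n * (-1)" using that by simp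
    thus ?thesis unfolding cyc_adj_def by (metis cong_iff_dvd_diff dvd_triv_left)
  qed
  ultimately show "cyc_adj n i i'" by blast
qed

lemma not_L:
  assumes n: "n \<ge> 2" and i: "i \<in> {1..n}" and i': "i' \<in> {1..n}"
    and adj: "cyc_adj n i i'" and "x i = 1" "x i' = 1"
  shows "\<not> in_L n x"
proof -
  have "i' = i+1 \<or> i = i'+1 \<or> (i=1 \<and> i'=n) \<or> (i=n \<and> i'=1)"
    using adj_char[OF n i i'] adj by simp
  thus ?thesis using assms unfolding in_L_def
    by (elim disjE; auto)
qed

lemma sum_single:
  fixes A :: "nat \<Rightarrow> nat \<Rightarrow> bit" and n j :: nat
  assumes "j \<in> {1..n}"
  shows "(\<Sum>t\<in>{1..n}. A i t * (if t = j then 1 else 0)) = (A i j :: bit)"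
proof -
  have "(\<Sum>t\<in>{1..n}. A i t * (if t = j then 1 else 0)) = (\<Sum>t\<in>{1..n}. if t = j then A i t else 0)"
    by (rule sum.cong) auto
  also have "\<dots> = (if j \<in> {1..n} then A i j else 0)" by (rule sum.delta) simp
  also have "\<dots> = A i j" using assms by simp
  finally show ?thesis .
qed

lemma sum_double:
  fixes A :: "nat \<Rightarrow> nat \<Rightarrow> bit" and n j k :: nat
  assumes "j \<in> {1..n}" "k \<in> {1..n}" "j \<noteq> k"
  shows "(\<Sum>t\<in>{1..n}. A i t * (if t = j \<or> t = k then 1 else 0)) = (A i j + A i k :: bit)"
proof -
  have "(\<Sum>t\<in>{1..n}. A i t * (if t = j \<or> t = k then 1 else 0))
      = (\<Sum>t\<in>{1..n}. (if t = j then A i t else 0) + (if t = k then A i t else 0))"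
    by (rule sum.cong) (use assms in auto)
  also have "\<dots> = (\<Sum>t\<in>{1..n}. if t = j then A i t else 0) + (\<Sum>t\<in>{1..n}. if t = k then A i t else 0)"
    by (rule sum.distrib)
  also have "(\<Sum>t\<in>{1..n}. if t = j then A i t else 0) = (if j \<in> {1..n} then A i j else 0)" by (rule sum.delta) simp
  also have "(\<Sum>t\<in>{1..n}. if t = k then A i t else 0) = (if k \<in> {1..n} then A i k else 0)" by (rule sum.delta) simp
  also have "(if j \<in> {1..n} then A i j else 0) + (if k \<in> {1..n} then A i k else 0) = A i j + A i k" using assms by simp
  finally show ?thesis .
qed

theorem lemma4:
  fixes n :: nat and A :: "nat \<Rightarrow> nat \<Rightarrow> bit" and i j i' k :: nat
  assumes "n \<ge> 2"
    and "L_good n A"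
    and "i \<in> {1..n}" and "j \<in> {1..n}" and "i' \<in> {1..n}" and "k \<in> {1..n}"
    and "A i j = 1"
    and "cyc_adj n i i'"
    and "A i' k = 1"
  shows "cyc_adj n j k"
proof (rule ccontr)
  assume nadj: "\<not> cyc_adj n j k"
  have pres: "\<And>x. in_L n x \<Longrightarrow> in_L n (mat_vec n A x)" using assms(2) unfolding L_good_def by blast
  have eL: "in_L n (\<lambda>t. if t = m then 1 else 0)" for m :: nat
    using assms(1) unfolding in_L_def by auto
  have col: "mat_vec n A (\<lambda>t. if t = m then 1 else 0) = (\<lambda>t. A t m)" if "m \<in> {1..n}" for m
    unfolding mat_vec_def by (rule ext, rule sum_single[OF that])
  have colL: "in_L n (\<lambda>t. A t m)" if "m \<in> {1..n}" for m
    using pres[OF eL[of m]] col[OF that] by simp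
  have adj': "cyc_adj n i' i"
    using adj_char[OF assms(1) assms(3) assms(5)] adj_char[OF assms(1) assms(5) assms(3)] assms(8) by auto
  have Ai'j: "A i' j = 0"
    using not_L[OF assms(1) assms(3) assms(5) assms(8), of "\<lambda>t. A t j"] colL[OF assms(4)] assms(7)
    by (metis bit_not_one_iff)
  have Aik: "A i k = 0"
    using not_L[OF assms(1) assms(3) assms(5) assms(8), of "\<lambda>t. A t k"] colL[OF assms(6)] assms(9)
    by (metis bit_not_one_iff)
  have jk: "j \<noteq> k" using Ai'j assms(9) by auto
  have nadj2: "\<not> (k = j+1 \<or> j = k+1 \<or> (j=1 \<and> k=n) \<or> (j=n \<and> k=1))"
    using adj_char[OF assms(1) assms(4) assms(6)] nadj by simp
  have xL: "in_L n (\<lambda>t. if t = j \<or> t = k then 1 else 0)"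
    unfolding in_L_def using nadj2 jk assms(4,6) by auto
  have v: "mat_vec n A (\<lambda>t. if t = j \<or> t = k then 1 else 0) = (\<lambda>t. A t j + A t k)"
    unfolding mat_vec_def by (rule ext, rule sum_double[OF assms(4) assms(6) jk])
  have "in_L n (\<lambda>t. A t j + A t k)" using pres[OF xL] v by simp
  moreover have "\<not> in_L n (\<lambda>t. A t j + A t k)"
    using not_L[OF assms(1) assms(3) assms(5) assms(8), of "\<lambda>t. A t j + A t k"] assms(7,9) Ai'j Aik
    by simp
  ultimately show False by simp
qed

end
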